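(* In the setting below, let $y^*\in\mathbb{R}^m_+$ be a dual optimal solution, i.e. $(x^*,y^* )$ satisfies the KKT condition, and let $\hat x\in\mathcal{X}$ and $\beta>0$. 1. If $\|\hat x-x^*\|^2\le 2\beta$, then $\|y^*\|_1\ge h_1(\hat x,\beta):=r\big[\|\nabla G(\hat x)\|+L_X\sqrt{2\beta}\big]^{-1}$. 2. If $(y^* )^\top\mu\cdot\|\hat x-x^*\|^2\le 2\beta$, then $$\|y^*\|_1\ge h_2(\hat x,\beta):=\Big[\tfrac{L_X}{r}\sqrt{\tfrac{\beta}{2\underline{\mu}}}+\sqrt{\tfrac{L_X^2\beta}{2\underline{\mu}r^2}+\tfrac{\|\nabla G(\hat x)\|}{r}}\Big]^{-2}.$$
   Context: Problem: $\min_{x\in\mathbb{R}^n}f(x)$ s.t. $g_i(x)\le0$, $i=1,\dots,m$; $f$ convex, continuous, bounded below; each $g_i$ differentiable and $\mu_i$-strongly convex ($\mu_i>0$). $G(x)=(g_1(x),\dots,g_m(x))^\top$, $\nabla G(x)=[\nabla g_1(x),\dots,\nabla g_m(x)]\in\mathbb{R}^{n\times m}$, $\mu=(\mu_1,\dots,\mu_m)^\top$, $\underline{\mu}=\min_i\mu_i$; $\|\cdot\|$ is the Euclidean norm and the induced operator norm on matrices. KKT: $y^*\ge0$, $0\in\partial f(x^* )+\nabla G(x^* )y^*$, $\langle y^*,G(x^* )\rangle=0$. Standing assumptions: there is $\tilde x$ with $g_i(\tilde x)<0$ for all $i$; for every minimizer $x_0^*$ of $f$ some $g_i(x_0^* )>0$;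 $x^*$ is the (unique) optimal solution; $r$ is a known constant with $\min_{\xi\in\partial f(x^* )}\|\xi\|\ge r>0$. $\mathcal{X}=\mathcal{B}(\tilde x,\min_i 2\sqrt{-2g_i(x_i^* )/\mu_i})$ with $x_i^*=\arg\min g_i$. $L_X>0$ satisfies $\|\nabla G(x)-\nabla G(\bar x)\|\le L_X\|x-\bar x\|$ for all $x,\bar x\in\mathcal{X}$. *)

theory Defs
  imports "HOL-Analysis.Analysis"
begin

definition strongly_convex :: "real \<Rightarrow> ('a::real_normed_vector \<Rightarrow> real) \<Rightarrow> bool" where
  "strongly_convex \<mu> g \<longleftrightarrow> (\<forall>x y t. 0 \<le> t \<and> t \<le> 1 \<longrightarrow>
     g (t *\<^sub>R x + (1 - t) *\<^sub>R y) \<le> t * g x + (1 - t) * g y - \<mu> / 2 * t * (1 - t) * (norm (x - y))\<^sup>2)"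

definition subdiff :: "('a::real_inner \<Rightarrow> real) \<Rightarrow> 'a \<Rightarrow> 'a set" where
  "subdiff f x = {\<xi>. \<forall>z. f z \<ge> f x + \<xi> \<bullet> (z - x)}"

text \<open>The n x m matrix nabla G(x) = [nabla g_1(x), ..., nabla g_m(x)] built from the gradients dg.\<close>
definition gradG :: "('m \<Rightarrow> real^'n \<Rightarrow> real^'n) \<Rightarrow> real^'n \<Rightarrow> real^'m^'n" where
  "gradG dg x = (\<chi> j k. dg k x $ j)"

definition opnorm :: "real^'m^'n \<Rightarrow> real" where
  "opnorm A = onorm (\<lambda>v. A *v v)"

definition norm1 :: "real^'m \<Rightarrow> real" where
  "norm1 y = (\<Sum>i\<in>UNIV. \<bar>y $ i\<bar>)"

end

theory Submission
  imports Defs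
begin

lemma opnorm_tri:
  fixes A B :: "real^'m^'n"
  shows "opnorm A \<le> opnorm B + opnorm (A - B)"
proof -
  have e: "(\<lambda>v. A *v v) = (\<lambda>v. B *v v + (A - B) *v v)"
    by (rule ext) (simp add: matrix_vector_mult_diff_rdistrib)
  show ?thesis unfolding opnorm_def e
    by (rule onorm_triangle) auto
qed

lemma opnorm_mul:
  fixes A :: "real^'m^'n"
  shows "norm (A *v y) \<le> opnorm A * norm y"
  unfolding opnorm_def by (rule onorm) auto

lemma sc_growth:
  assumes sc: "strongly_convex mu g" and mn: "\<And>z. g xs \<le> g z" and mu: "mu > 0"
  shows "mu / 2 * (norm (z - xs))\<^sup>2 \<le> g z - g xs"
proof (rule ccontr)
  define a where "a = mu / 2 * (norm (z - xs))\<^sup>2"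
  define c where "c = g z - g xs"
  assume "\<not> ?thesis"
  hence ac: "a > c" unfolding a_def c_def by simp
  have c0: "c \<ge> 0" using mn unfolding c_def by auto
  hence a0: "a > 0" using ac by simp
  define t where "t = (a - c) / (2 * a)"
  have t0: "0 < t" and t1: "t \<le> 1" using ac a0 c0 unfolding t_def by (auto simp: field_simps)
  have "g (t *\<^sub>R z + (1 - t) *\<^sub>R xs) \<le> t * g z + (1 - t) * g xs - mu / 2 * t * (1 - t) * (norm (z - xs))\<^sup>2"
    using sc t0 t1 unfolding strongly_convex_def by auto
  moreover have "g xs \<le> g (t *\<^sub>R z + (1 - t) *\<^sub>R xs)" by (rule mn)
  ultimately have "t * g xs \<le> t * g z - t * ((1 - t) * a)"
    unfolding a_def by (simp add: algebra_simps)
  hence "t * ((1 - t) * a) \<le> t * c" unfolding c_def by (simp add: algebra_simps)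
  hence "(1 - t) * a \<le> c" using t0 by simp
  moreover have "(1 - t) * a = (a + c) / 2" using a0 unfolding t_def by (simp add: field_simps)
  ultimately show False using ac by simp
qed

theorem proposition4:
  fixes f :: "real^'n \<Rightarrow> real"
    and g :: "'m::finite \<Rightarrow> real^'n \<Rightarrow> real"
    and dg :: "'m \<Rightarrow> real^'n \<Rightarrow> real^'n"
    and \<mu> :: "'m \<Rightarrow> real"
    and xt xopt xhat :: "real^'n"
    and xs :: "'m \<Rightarrow> real^'n"
    and yopt :: "real^'m"
    and r LX \<beta> :: real
    and X :: "(real^'n) set"
  assumes f_convex: "convex_on UNIV f"
    and f_cont: "continuous_on UNIV f"
    and f_bdd: "bdd_below (range f)"
    and g_grad: "\<And>i x. GDERIV (g i) x :> dg i x"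
    and mu_pos: "\<And>i. \<mu> i > 0"
    and g_sc: "\<And>i. strongly_convex (\<mu> i) (g i)"
    and slater: "\<And>i. g i xt < 0"
    and unconstr: "\<And>x0. (\<forall>z. f x0 \<le> f z) \<Longrightarrow> \<exists>i. g i x0 > 0"
    and xopt_feas: "\<And>i. g i xopt \<le> 0"
    and xopt_opt: "\<And>x. (\<forall>i. g i x \<le> 0) \<Longrightarrow> f xopt \<le> f x"
    and xopt_unique: "\<And>x. (\<forall>i. g i x \<le> 0) \<Longrightarrow> f x \<le> f xopt \<Longrightarrow> x = xopt"
    and r_pos: "r > 0"
    and r_bound: "\<And>\<xi>. \<xi> \<in> subdiff f xopt \<Longrightarrow> norm \<xi> \<ge> r"
    and xs_min: "\<And>i z. g i (xs i) \<le> g i z"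
    and X_def: "X = ball xt (Min (range (\<lambda>i. 2 * sqrt (- 2 * g i (xs i) / \<mu> i))))"
    and LX_pos: "LX > 0"
    and LX_lip: "\<And>x x'. x \<in> X \<Longrightarrow> x' \<in> X \<Longrightarrow>
                   opnorm (gradG dg x - gradG dg x') \<le> LX * norm (x - x')"
    and kkt_nonneg: "\<And>i. yopt $ i \<ge> 0"
    and kkt_stat: "\<exists>\<xi>\<in>subdiff f xopt. \<xi> + gradG dg xopt *v yopt = 0"
    and kkt_compl: "(\<Sum>i\<in>UNIV. yopt $ i * g i xopt) = 0"
    and xhat_X: "xhat \<in> X"
    and beta_pos: "\<beta> > 0"
  shows "((norm (xhat - xopt))\<^sup>2 \<le> 2 * \<beta> \<longrightarrow>
            norm1 yopt \<ge> r / (opnorm (gradG dg xhat) + LX * sqrt (2 * \<beta>)))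
       \<and> ((\<Sum>i\<in>UNIV. yopt $ i * \<mu> i) * (norm (xhat - xopt))\<^sup>2 \<le> 2 * \<beta> \<longrightarrow>
            norm1 yopt \<ge> (LX / r * sqrt (\<beta> / (2 * Min (range \<mu>)))
               + sqrt (LX\<^sup>2 * \<beta> / (2 * Min (range \<mu>) * r\<^sup>2) + opnorm (gradG dg xhat) / r)) powr (-2))"
proof -
  have dist_i: "norm (xt - xopt) < 2 * sqrt (- 2 * g i (xs i) / \<mu> i)" for i
  proof -
    have m: "\<mu> i > 0" by (rule mu_pos)
    have h1: "\<mu> i / 2 * (norm (xt - xs i))\<^sup>2 \<le> g i xt - g i (xs i)"
      by (rule sc_growth[OF g_sc xs_min m])
    have h2: "\<mu> i / 2 * (norm (xopt - xs i))\<^sup>2 \<le> g i xopt - g i (xs i)"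
      by (rule sc_growth[OF g_sc xs_min m])
    define R where "R = - 2 * g i (xs i) / \<mu> i"
    have q1: "(norm (xt - xs i))\<^sup>2 < R" using h1 slater[of i] m unfolding R_def
      by (simp add: field_simps)
    have q2: "(norm (xopt - xs i))\<^sup>2 \<le> R" using h2 xopt_feas[of i] m unfolding R_def
      by (simp add: field_simps)
    have s1: "norm (xt - xs i) < sqrt R" using q1 real_less_rsqrt by blast
    have s2: "norm (xopt - xs i) \<le> sqrt R" using q2 real_le_rsqrt by blast
    have "norm (xt - xopt) \<le> norm (xt - xs i) + norm (xopt - xs i)"
      using norm_triangle_ineq4[of "xt - xs i" "xopt - xs i"] by simp
    thus ?thesis using s1 s2 unfolding R_def by simp
  qed
  have xopt_X: "xopt \<in> X"
    unfolding X_def mem_ball dist_norm using dist_i by (simp)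
  obtain \<xi> where xi: "\<xi> \<in> subdiff f xopt" "\<xi> + gradG dg xopt *v yopt = 0" using kkt_stat by blast
  have rle: "r \<le> opnorm (gradG dg xopt) * norm1 yopt"
  proof -
    have "\<xi> = - (gradG dg xopt *v yopt)" using xi(2) by (simp add: eq_neg_iff_add_eq_0)
    hence "r \<le> norm (gradG dg xopt *v yopt)" using r_bound[OF xi(1)] by simp
    also have "\<dots> \<le> opnorm (gradG dg xopt) * norm yopt" by (rule opnorm_mul)
    also have "\<dots> \<le> opnorm (gradG dg xopt) * norm1 yopt"
      unfolding norm1_def by (intro mult_left_mono norm_le_l1_cart) (auto simp: opnorm_def onorm_pos_le)
    finally show ?thesis .
  qed
  define a where "a = opnorm (gradG dg xhat)"
  have a0: "a \<ge> 0" unfolding a_def opnorm_def by (auto simp: onorm_pos_le)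
  define N where "N = norm1 yopt"
  define \<delta> where "\<delta> = norm (xhat - xopt)"
  have d0: "\<delta> \<ge> 0" unfolding \<delta>_def by simp
  have lipb: "opnorm (gradG dg xopt) \<le> a + LX * \<delta>"
  proof -
    have "opnorm (gradG dg xopt) \<le> a + opnorm (gradG dg xopt - gradG dg xhat)"
      unfolding a_def by (rule opnorm_tri)
    also have "opnorm (gradG dg xopt - gradG dg xhat) \<le> LX * \<delta>"
      using LX_lip[OF xopt_X xhat_X] unfolding \<delta>_def by (simp add: norm_minus_commute)
    finally show ?thesis by simp
  qed
  have N0: "N \<ge> 0" unfolding N_def norm1_def by (simp add: sum_nonneg)
  have key: "r \<le> (a + LX * \<delta>) * N" using rle lipb N0 unfolding N_def
    by (meson mult_right_mono order_trans)
  have Npos: "N > 0" using key r_pos N0 by (cases "N = 0") auto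
  show ?thesis
  proof (intro conjI impI)
    assume h: "(norm (xhat - xopt))\<^sup>2 \<le> 2 * \<beta>"
    have "\<delta> \<le> sqrt (2 * \<beta>)" using h unfolding \<delta>_def using real_le_rsqrt by blast
    hence "(a + LX * \<delta>) * N \<le> (a + LX * sqrt (2 * \<beta>)) * N"
      using LX_pos Npos by (intro mult_right_mono) auto
    hence "r \<le> (a + LX * sqrt (2 * \<beta>)) * N" using key by simp
    moreover have "a + LX * sqrt (2 * \<beta>) > 0" using a0 LX_pos beta_pos by (simp add: add_nonneg_pos)
    ultimately show "norm1 yopt \<ge> r / (opnorm (gradG dg xhat) + LX * sqrt (2 * \<beta>))"
      unfolding a_def[symmetric] N_def[symmetric] by (simp add: divide_le_eq mult.commute)
  next
    assume h: "(\<Sum>i\<in>UNIV. yopt $ i * \<mu> i) * (norm (xhat - xopt))\<^sup>2 \<le> 2 * \<beta>"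
    define m where "m = Min (range \<mu>)"
    have m_in: "m \<in> range \<mu>" unfolding m_def by (rule Min_in) auto
    have m0: "m > 0" using m_in mu_pos by auto
    have mle: "m \<le> \<mu> i" for i unfolding m_def by (rule Min_le) auto
    have "m * N = (\<Sum>i\<in>UNIV. yopt $ i * m)" unfolding N_def norm1_def
      using kkt_nonneg by (simp add: sum_distrib_left mult.commute)
    also have "\<dots> \<le> (\<Sum>i\<in>UNIV. yopt $ i * \<mu> i)"
      by (intro sum_mono mult_left_mono mle kkt_nonneg)
    finally have "m * N * \<delta>\<^sup>2 \<le> 2 * \<beta>" using h unfolding \<delta>_def
      by (meson mult_right_mono order_trans zero_le_power2)
    hence d2: "\<delta>\<^sup>2 \<le> 2 * \<beta> / (m * N)" using m0 Npos by (simp add: field_simps)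
    define p where "p = LX / r * sqrt (\<beta> / (2 * m))"
    have p0: "p > 0" unfolding p_def using LX_pos r_pos beta_pos m0 by simp
    have pp: "p\<^sup>2 = LX\<^sup>2 * \<beta> / (2 * m * r\<^sup>2)" unfolding p_def using beta_pos m0
      by (simp add: power_mult_distrib power_divide field_simps)
    define u where "u = sqrt N"
    have u0: "u > 0" unfolding u_def using Npos by simp
    have uN: "u\<^sup>2 = N" unfolding u_def using N0 by simp
    have "\<delta> \<le> sqrt (2 * \<beta> / (m * N))" using d2 real_le_rsqrt by blast
    also have "sqrt (2 * \<beta> / (m * N)) = 2 * r * p / LX / u"
    proof -
      have e1: "2 * \<beta> / (m * N) = 4 * (\<beta> / (2 * m)) / N" using m0 Npos by (simp add: field_simps)
      have s4: "sqrt (4::real) = 2" by (rule real_sqrt_unique) auto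
      have "sqrt (2 * \<beta> / (m * N)) = sqrt (4 * (\<beta> / (2 * m))) / u"
        unfolding u_def e1 by (rule real_sqrt_divide)
      also have "\<dots> = 2 * sqrt (\<beta> / (2 * m)) / u" by (simp only: real_sqrt_mult s4)
      also have "\<dots> = 2 * r * p / LX / u" unfolding p_def using r_pos LX_pos by simp
      finally show ?thesis .
    qed
    finally have dl: "\<delta> \<le> 2 * r * p / LX / u" .
    have "r \<le> (a + LX * \<delta>) * N" by (rule key)
    also have "\<dots> \<le> (a + LX * (2 * r * p / LX / u)) * N"
      using dl LX_pos N0 by (intro mult_right_mono add_left_mono mult_left_mono) auto
    also have "\<dots> = a * u\<^sup>2 + 2 * r * p * u" using LX_pos u0 uN[symmetric]
      by (simp add: field_simps power2_eq_square)
    finally have k2: "r \<le> a * u\<^sup>2 + 2 * r * p * u" .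
    define v where "v = 1 / u"
    have v0: "v > 0" unfolding v_def using u0 by simp
    have "r * v\<^sup>2 \<le> (a * u\<^sup>2 + 2 * r * p * u) * v\<^sup>2" using k2 by (simp add: mult_right_mono)
    also have "\<dots> = a + 2 * r * p * v" unfolding v_def using u0 by (simp add: field_simps power2_eq_square)
    finally have "v\<^sup>2 \<le> a / r + 2 * p * v" using r_pos by (simp add: field_simps)
    hence "(v - p)\<^sup>2 \<le> p\<^sup>2 + a / r" by (simp add: power2_eq_square algebra_simps)
    hence "\<bar>v - p\<bar> \<le> sqrt (p\<^sup>2 + a / r)" using real_le_rsqrt by (metis real_sqrt_abs real_sqrt_le_mono)
    hence vle: "v \<le> p + sqrt (p\<^sup>2 + a / r)" by simp
    define w where "w = p + sqrt (p\<^sup>2 + a / r)"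
    have w0: "w > 0" unfolding w_def using p0 a0 r_pos by (simp add: add_pos_nonneg)
    have "v\<^sup>2 \<le> w\<^sup>2" using vle v0 unfolding w_def by (intro power_mono) auto
    hence "1 / N \<le> w\<^sup>2" unfolding v_def uN[symmetric] by (simp add: power_divide)
    hence "1 / w\<^sup>2 \<le> N" using Npos w0 by (simp add: field_simps)
    moreover have "w powr (-2) = 1 / w\<^sup>2" using w0 by (simp add: powr_minus powr_numeral divide_inverse)
    moreover have "w = LX / r * sqrt (\<beta> / (2 * Min (range \<mu>)))
               + sqrt (LX\<^sup>2 * \<beta> / (2 * Min (range \<mu>) * r\<^sup>2) + opnorm (gradG dg xhat) / r)"
      unfolding w_def pp unfolding p_def m_def a_def ..
    ultimately show "norm1 yopt \<ge> (LX / r * sqrt (\<beta> / (2 * Min (range \<mu>)))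
               + sqrt (LX\<^sup>2 * \<beta> / (2 * Min (range \<mu>) * r\<^sup>2) + opnorm (gradG dg xhat) / r)) powr (-2)"
      unfolding N_def by simp
  qed
qed

end
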